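(* For a given temporal graph $G$ on $n$ vertices with lifetime $L$, one can build a temporal $\lfloor\log n\rfloor$-spanner $H$ of $G$ of size $O(Ln)$.
   Context: A temporal graph is an undirected graph $G=(V,E)$ with a labeling $\lambda:E\to\mathbb{N}^+$; its lifetime $L$ is the number of distinct labels used. A temporal path is a path whose traversed edges have non-decreasing labels in the order of traversal; its length is its number of edges, and $d_G(u,v)$ is the minimum length of a temporal path from $u$ to $v$ in $G$ ($+\infty$ if none). A temporal $\alpha$-spanner of $G$ is a subgraph $H$ with $V(H)=V$, $E(H)\subseteq E$ (same labels), such that $d_H(u,v)\le\alpha\, d_G(u,v)$ for all $u,v\in V$. Size means number of edges. *)

theory Defs
  imports Complex_Main "HOL-Library.Extended_Nat"
begin

definition temporal_graph :: "'a set \<Rightarrow> 'a set set \<Rightarrow> ('a set \<Rightarrow> nat) \<Rightarrow> bool" where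
  "temporal_graph V E lam \<longleftrightarrow> finite V \<and>
     E \<subseteq> {e. \<exists>a b. e = {a, b} \<and> a \<noteq> b \<and> a \<in> V \<and> b \<in> V} \<and>
     (\<forall>e\<in>E. lam e > 0)"

definition lifetime :: "'a set set \<Rightarrow> ('a set \<Rightarrow> nat) \<Rightarrow> nat" where
  "lifetime E lam = card (lam ` E)"

definition path_edges :: "'a list \<Rightarrow> 'a set list" where
  "path_edges xs = map2 (\<lambda>a b. {a, b}) xs (tl xs)"

definition temporal_path :: "'a set set \<Rightarrow> ('a set \<Rightarrow> nat) \<Rightarrow> 'a list \<Rightarrow> bool" where
  "temporal_path E lam xs \<longleftrightarrow> xs \<noteq> [] \<and> distinct xs \<and>
     set (path_edges xs) \<subseteq> E \<and> sorted (map lam (path_edges xs))"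

text \<open>Temporal distance (infinity if no temporal path).\<close>
definition temporal_dist :: "'a set set \<Rightarrow> ('a set \<Rightarrow> nat) \<Rightarrow> 'a \<Rightarrow> 'a \<Rightarrow> enat" where
  "temporal_dist E lam u v =
     (INF xs \<in> {xs. temporal_path E lam xs \<and> hd xs = u \<and> last xs = v}. enat (length xs - 1))"

definition temporal_spanner :: "'a set \<Rightarrow> 'a set set \<Rightarrow> ('a set \<Rightarrow> nat) \<Rightarrow> nat \<Rightarrow> 'a set set \<Rightarrow> bool" where
  "temporal_spanner V E lam \<alpha> H \<longleftrightarrow> H \<subseteq> E \<and>
     (\<forall>u\<in>V. \<forall>v\<in>V. temporal_dist E lam u v \<noteq> \<infinity> \<longrightarrow>
        temporal_dist H lam u v \<le> enat \<alpha> * temporal_dist E lam u v)"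

end

theory Submission
  imports Defs
begin

lemma pe_Nil[simp]: "path_edges [] = []"
  by (simp add: path_edges_def)
lemma pe_single[simp]: "path_edges [a] = []"
  by (simp add: path_edges_def)
lemma pe_Cons2[simp]: "path_edges (a # b # xs) = {a,b} # path_edges (b # xs)"
  by (simp add: path_edges_def)

lemma pe_append: "path_edges (xs @ y # ys) = path_edges (xs @ [y]) @ path_edges (y # ys)"
proof (induction xs)
  case Nil then show ?case by simp
next
  case (Cons x xs)
  then show ?case by (cases xs) auto
qed

lemma pe_rev: "path_edges (rev xs) = rev (path_edges xs)"
proof (induction xs rule: induct_list012)
  case (3 x y zs)
  have "path_edges (rev (x # y # zs)) = path_edges (rev zs @ y # [x])" by simp
  also have "\<dots> = path_edges (rev zs @ [y]) @ path_edges [y, x]" by (rule pe_append)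
  also have "\<dots> = rev (path_edges (x # y # zs))" using 3 by (simp add: insert_commute)
  finally show ?case .
qed simp_all

definition walk :: "'a set set \<Rightarrow> 'a list \<Rightarrow> 'a \<Rightarrow> 'a \<Rightarrow> bool" where
  "walk S ws a b \<longleftrightarrow> ws \<noteq> [] \<and> set (path_edges ws) \<subseteq> S \<and> hd ws = a \<and> last ws = b"

lemma pe_concat:
  assumes "xs \<noteq> []" "ys \<noteq> []" "last xs = hd ys"
  shows "path_edges (xs @ tl ys) = path_edges xs @ path_edges ys"
proof -
  obtain y ys' where y: "ys = y # ys'" using assms by (cases ys) auto
  have x: "xs = butlast xs @ [y]" using assms y append_butlast_last_id[of xs] by simp
  have eq: "xs @ tl ys = butlast xs @ y # ys'" using y x by (metis append.assoc append_Cons append_Nil list.sel(3))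
  have "path_edges (xs @ tl ys) = path_edges (butlast xs @ [y]) @ path_edges (y # ys')"
    unfolding eq by (rule pe_append)
  also have "butlast xs @ [y] = xs" by (rule x[symmetric])
  finally show ?thesis using y by simp
qed

lemma walk_append:
  assumes "walk S xs a b" "walk S ys b c"
  shows "walk S (xs @ tl ys) a c \<and> length (xs @ tl ys) = length xs + length ys - 1"
proof -
  have ne: "xs \<noteq> []" "ys \<noteq> []" and l: "last xs = hd ys" using assms by (auto simp: walk_def)
  have "last (xs @ tl ys) = c"
  proof (cases "tl ys = []")
    case True
    then have "ys = [hd ys]" using ne by (cases ys) auto
    then have "last ys = hd ys" by (metis last.simps)
    then show ?thesis using assms True l unfolding walk_def by simp
  next
    case False
    then show ?thesis using assms ne by (auto simp: walk_def last_tl)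
  qed
  moreover have "length (xs @ tl ys) = length xs + length ys - 1" using ne by (cases ys) auto
  ultimately show ?thesis using assms ne pe_concat[OF ne l] by (auto simp: walk_def)
qed

lemma walk_rev: "walk S xs a b \<Longrightarrow> walk S (rev xs) b a"
  by (auto simp: walk_def pe_rev hd_rev last_rev)

lemma walk_mono: "walk S xs a b \<Longrightarrow> S \<subseteq> S' \<Longrightarrow> walk S' xs a b"
  by (auto simp: walk_def)

lemma sorted_const: "\<forall>x\<in>set xs. x = (l::nat) \<Longrightarrow> sorted xs"
  by (induction xs) auto

lemma sorted_drop_mid: "sorted (A @ B @ C) \<Longrightarrow> sorted (A @ C)"
  by (auto simp: sorted_append)

lemma shortcut:
  "xs \<noteq> [] \<Longrightarrow> set (path_edges xs) \<subseteq> H \<Longrightarrow> sorted (map lam (path_edges xs)) \<Longrightarrow>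
   \<exists>ys. temporal_path H lam ys \<and> hd ys = hd xs \<and> last ys = last xs \<and> length ys \<le> length xs"
proof (induction "length xs" arbitrary: xs rule: less_induct)
  case less
  show ?case
  proof (cases "distinct xs")
    case True then show ?thesis using less.prems by (auto simp: temporal_path_def)
  next
    case False
    then obtain p q s y where d: "xs = p @ [y] @ q @ [y] @ s" using not_distinct_decomp by blast
    have e1: "path_edges xs = path_edges (p @ [y]) @ path_edges (y # q @ [y]) @ path_edges (y # s)"
      using d pe_append[of p y "q @ [y] @ s"] pe_append[of "y # q" y s] by simp
    have e2: "path_edges (p @ [y] @ s) = path_edges (p @ [y]) @ path_edges (y # s)"
      using pe_append[of p y s] by simp
    have "length (p @ [y] @ s) < length xs" using d by simp
    moreover have "set (path_edges (p @ [y] @ s)) \<subseteq> H" using less.prems e1 e2 by auto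
    moreover have "sorted (map lam (path_edges (p @ [y] @ s)))"
    proof -
      have "sorted (map lam (path_edges (p @ [y])) @ map lam (path_edges (y # q @ [y])) @ map lam (path_edges (y # s)))"
        using less.prems(3) e1 by simp
      then show ?thesis unfolding e2 map_append by (rule sorted_drop_mid)
    qed
    ultimately obtain ys where ys: "temporal_path H lam ys" "hd ys = hd (p @ [y] @ s)"
      "last ys = last (p @ [y] @ s)" "length ys \<le> length (p @ [y] @ s)"
      using less.hyps[of "p @ [y] @ s"] by blast
    have "hd (p @ [y] @ s) = hd xs" using d by (cases p) auto
    moreover have "last (p @ [y] @ s) = last xs" using d by (cases s rule: rev_cases) auto
    ultimately show ?thesis using ys \<open>length (p @ [y] @ s) < length xs\<close> by (metis less_imp_le order_trans)
  qed
qed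

lemma static_spanner:
  assumes "finite V" "E \<subseteq> {e. \<exists>a b. e = {a, b} \<and> a \<noteq> b \<and> a \<in> V \<and> b \<in> V}"
  shows "\<exists>S \<subseteq> E. card S \<le> 16 * card V \<and>
     (\<forall>a b. {a,b} \<in> E \<longrightarrow> (\<exists>ws r. walk S ws a b \<and> length ws \<le> 2*r+2 \<and> 16^r \<le> card V))"
  using assms
proof (induction "card V" arbitrary: V E rule: less_induct)
  case less
  note fin = less.prems(1) and Esub = less.prems(2)
  show ?case
  proof (cases "E = {}")
    case True
    then show ?thesis by auto
  next
    case False
    then obtain x y where xy: "{x,y} \<in> E" "x \<in> V" using Esub by blast
    define N where "N A = A \<union> {w. \<exists>u\<in>A. {u,w} \<in> E}" for A
    define B where "B i = (N ^^ i) {x}" for i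
    have B0: "B 0 = {x}" by (simp add: B_def)
    have BS: "B (Suc i) = N (B i)" for i by (simp add: B_def)
    have edgeV: "w \<in> V" if "{u,w} \<in> E" for u w
      using that Esub by (auto simp: doubleton_eq_iff)
    have BV: "B i \<subseteq> V" for i
      by (induction i) (auto simp: B0 BS N_def xy edgeV)
    have finB: "finite (B i)" for i using BV fin finite_subset by blast
    have Bsuc: "B i \<subseteq> B (Suc i)" for i by (auto simp: BS N_def)
    have Bmono: "i \<le> j \<Longrightarrow> B i \<subseteq> B j" for i j
      using lift_Suc_mono_le[of B, OF Bsuc] by blast
    have xB: "x \<in> B i" for i using Bmono[of 0 i] B0 by auto
    have grow: "16^i \<le> card (B i)" if "\<And>j. j < i \<Longrightarrow> 16 * card (B j) < card (B (Suc j))" for i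
      using that
    proof (induction i)
      case 0 then show ?case by (simp add: B0)
    next
      case (Suc i)
      then have "16^i \<le> card (B i)" by auto
      moreover have "16 * card (B i) < card (B (Suc i))" using Suc.prems by auto
      ultimately show ?case by simp
    qed
    have ex: "\<exists>i. card (B (Suc i)) \<le> 16 * card (B i)"
    proof (rule ccontr)
      assume "\<not> ?thesis"
      then have "16 ^ card V \<le> card (B (card V))" using grow by (meson not_le)
      moreover have "card (B (card V)) \<le> card V" using BV fin card_mono by blast
      moreover have "card V < 16 ^ card V"
      proof -
        have "card V < 2 ^ card V" by (rule less_exp)
        also have "(2::nat) ^ card V \<le> 16 ^ card V" by (rule power_mono) auto
        finally show ?thesis .
      qed
      ultimately show False by linarith
    qed
    define r where "r = (LEAST i. card (B (Suc i)) \<le> 16 * card (B i))"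
    have hr: "card (B (Suc r)) \<le> 16 * card (B r)" unfolding r_def using LeastI_ex[OF ex] .
    have r16: "16^r \<le> card (B r)"
      by (rule grow) (metis (mono_tags, lifting) not_le not_less_Least r_def)
    define lev where "lev w = (LEAST i. w \<in> B (Suc i))" for w
    define q where "q w = (SOME u. u \<in> B (lev w) \<and> {u,w} \<in> E)" for w
    define T where "T = (\<lambda>w. {w, q w}) ` (B (Suc r) - {x})"
    have qprop: "lev w \<le> j \<and> q w \<in> B (lev w) \<and> {q w, w} \<in> E" if "w \<in> B (Suc j)" "w \<noteq> x" for w j
    proof -
      have l1: "lev w \<le> j" unfolding lev_def using that(1) by (rule Least_le)
      have l2: "w \<in> B (Suc (lev w))" unfolding lev_def using that(1) by (rule LeastI)
      have l3: "w \<notin> B (lev w)"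
      proof (cases "lev w")
        case 0 then show ?thesis using that B0 by auto
      next
        case (Suc k)
        then have "k < lev w" by simp
        then show ?thesis unfolding lev_def using Suc not_less_Least unfolding lev_def by metis
      qed
      have "\<exists>u. u \<in> B (lev w) \<and> {u,w} \<in> E" using l2 l3 by (auto simp: BS N_def)
      then have "q w \<in> B (lev w) \<and> {q w, w} \<in> E" unfolding q_def by (rule someI_ex)
      then show ?thesis using l1 by simp
    qed
    have TE: "T \<subseteq> E" unfolding T_def using qprop by (auto simp: insert_commute)
    have cardT: "card T \<le> 16 * card (B r)"
      unfolding T_def using card_image_le[of "B (Suc r) - {x}"] finB hr
      by (meson card_Diff1_le finite_Diff le_trans)
    have wk: "j \<le> Suc r \<Longrightarrow> w \<in> B j \<Longrightarrow> \<exists>ws. walk T ws w x \<and> length ws \<le> j + 1" for j w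
    proof (induction j arbitrary: w)
      case 0 then show ?case using B0 by (intro exI[of _ "[x]"]) (auto simp: walk_def)
    next
      case (Suc j)
      show ?case
      proof (cases "w = x")
        case True then show ?thesis by (intro exI[of _ "[x]"]) (auto simp: walk_def)
      next
        case False
        from qprop[OF Suc.prems(2) False] have qp: "lev w \<le> j" "q w \<in> B (lev w)" by auto
        then have "q w \<in> B j" using Bmono by blast
        then obtain ws where ws: "walk T ws (q w) x" "length ws \<le> j + 1" using Suc by auto
        have "w \<in> B (Suc r) - {x}" using Suc.prems Bmono False by blast
        then have wT: "{w, q w} \<in> T" unfolding T_def by blast
        have "ws = q w # tl ws" using ws(1) unfolding walk_def by (metis list.collapse)
        then have "path_edges (w # ws) = {w, q w} # path_edges ws" by (metis pe_Cons2)
        then have "walk T (w # ws) w x" using ws(1) wT by (auto simp: walk_def)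
        then show ?thesis using ws(2) by (intro exI[of _ "w # ws"]) auto
      qed
    qed
    have pair: "\<exists>ws. walk T ws a b \<and> length ws \<le> 2*r+2" if ab0: "a \<in> B r" "b \<in> B (Suc r)" for a b
    proof -
      obtain wa where wa: "walk T wa a x" "length wa \<le> r + 1" using wk[of r a] ab0 by auto
      obtain wb where wb: "walk T wb b x" "length wb \<le> Suc r + 1" using wk[of "Suc r" b] ab0 by auto
      have "walk T (rev wb) x b" using walk_rev[OF wb(1)] .
      from walk_append[OF wa(1) this] show ?thesis using wa(2) wb(2) by (intro exI[of _ "wa @ tl (rev wb)"]) auto
    qed
    define V' where "V' = V - B r"
    define E' where "E' = {e \<in> E. e \<inter> B r = {}}"
    have c1: "card V' < card V" unfolding V'_def using fin BV xB[of r] xy(2)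
      by (intro psubset_card_mono) auto
    have c2: "finite V'" using fin V'_def by simp
    have c3: "E' \<subseteq> {e. \<exists>a b. e = {a, b} \<and> a \<noteq> b \<and> a \<in> V' \<and> b \<in> V'}"
    proof
      fix e assume "e \<in> E'"
      then have e: "e \<in> E" "e \<inter> B r = {}" unfolding E'_def by auto
      then obtain a b where "e = {a,b}" "a \<noteq> b" "a \<in> V" "b \<in> V" using Esub by blast
      then show "e \<in> {e. \<exists>a b. e = {a, b} \<and> a \<noteq> b \<and> a \<in> V' \<and> b \<in> V'}"
        using e(2) unfolding V'_def by auto
    qed
    from less.hyps[OF c1 c2 c3] obtain S' where S': "S' \<subseteq> E'" "card S' \<le> 16 * card V'"
      "\<forall>a b. {a,b} \<in> E' \<longrightarrow> (\<exists>ws r. walk S' ws a b \<and> length ws \<le> 2*r+2 \<and> 16^r \<le> card V')"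
      by blast
    have cBr: "card (B r) \<le> card V" using BV fin card_mono by blast
    have cV: "card V = card V' + card (B r)" unfolding V'_def
      using card_Diff_subset[OF finB BV] cBr by simp
    show ?thesis
    proof (intro exI[of _ "S' \<union> T"] conjI allI impI)
      show "S' \<union> T \<subseteq> E" using S'(1) TE E'_def by auto
      have "card (S' \<union> T) \<le> card S' + card T" by (rule card_Un_le)
      then show "card (S' \<union> T) \<le> 16 * card V" using S'(2) cardT cV by linarith
    next
      fix a b assume ab: "{a,b} \<in> E"
      show "\<exists>ws r. walk (S' \<union> T) ws a b \<and> length ws \<le> 2*r+2 \<and> 16^r \<le> card V"
      proof (cases "{a,b} \<inter> B r = {}")
        case True
        then have "{a,b} \<in> E'" using ab E'_def by auto
        then obtain ws r' where "walk S' ws a b" "length ws \<le> 2*r'+2" "16^r' \<le> card V'"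
          using S'(3) by blast
        moreover have "card V' \<le> card V" using cV by simp
        ultimately have "walk (S' \<union> T) ws a b" "length ws \<le> 2*r'+2" "16^r' \<le> card V"
          using walk_mono[of S' ws a b "S' \<union> T"] by auto
        then show ?thesis by blast
      next
        case False
        then consider "a \<in> B r" | "b \<in> B r" by auto
        then obtain ws where "walk T ws a b" "length ws \<le> 2*r+2"
        proof cases
          case 1
          then have "b \<in> B (Suc r)" using ab by (auto simp: BS N_def)
          then show ?thesis using pair 1 that by blast
        next
          case 2
          then have "a \<in> B (Suc r)" using ab by (auto simp: BS N_def insert_commute)
          then obtain ws where "walk T ws b a" "length ws \<le> 2*r+2" using pair 2 by blast
          then show ?thesis using that[of "rev ws"] walk_rev[of T ws b a] by simp
        qed
        then have "walk (S' \<union> T) ws a b" "length ws \<le> 2*r+2" using walk_mono[of T ws a b "S' \<union> T"] by auto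
        moreover have "16^r \<le> card V" using r16 cBr by linarith
        ultimately show ?thesis by blast
      qed
    qed
  qed
qed

lemma temporal_walk:
  fixes lam :: "'a set \<Rightarrow> nat"
  assumes edge: "\<And>a b. {a,b} \<in> E \<Longrightarrow> \<exists>ws. walk H ws a b \<and>
      (\<forall>f\<in>set (path_edges ws). lam f = lam {a,b}) \<and> length ws \<le> t + 1"
  shows "xs \<noteq> [] \<Longrightarrow> set (path_edges xs) \<subseteq> E \<Longrightarrow> sorted (map lam (path_edges xs)) \<Longrightarrow>
    \<exists>W. walk H W (hd xs) (last xs) \<and> sorted (map lam (path_edges W)) \<and>
      lam ` set (path_edges W) \<subseteq> lam ` set (path_edges xs) \<and> length W - 1 \<le> t * (length xs - 1)"
proof (induction xs)
  case Nil then show ?case by simp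
next
  case (Cons a xs)
  show ?case
  proof (cases xs)
    case Nil
    then show ?thesis by (intro exI[of _ "[a]"]) (auto simp: walk_def)
  next
    case (Cons b rest)
    have pe: "path_edges (a # xs) = {a,b} # path_edges xs" using Cons by simp
    have xsE: "set (path_edges xs) \<subseteq> E" and abE: "{a,b} \<in> E" using Cons.prems(2) pe by auto
    have srt: "sorted (map lam (path_edges xs))" and lb: "\<forall>y\<in>set (map lam (path_edges xs)). lam {a,b} \<le> y"
      using Cons.prems(3) pe by auto
    obtain W where W: "walk H W (hd xs) (last xs)" "sorted (map lam (path_edges W))"
      "lam ` set (path_edges W) \<subseteq> lam ` set (path_edges xs)" "length W - 1 \<le> t * (length xs - 1)"
      using Cons.IH[OF _ xsE srt] Cons by auto
    obtain ws where ws: "walk H ws a b" "\<forall>f\<in>set (path_edges ws). lam f = lam {a,b}" "length ws \<le> t + 1"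
      using edge[OF abE] by blast
    have hb: "hd xs = b" using Cons by simp
    have la: "last (a # xs) = last xs" using Cons by simp
    from walk_append[OF ws(1) W(1)[unfolded hb]]
    have wa: "walk H (ws @ tl W) a (last xs)" "length (ws @ tl W) = length ws + length W - 1" by auto
    have ne: "ws \<noteq> []" "W \<noteq> []" "last ws = hd W" using ws(1) W(1) hb by (auto simp: walk_def)
    have pc: "path_edges (ws @ tl W) = path_edges ws @ path_edges W" by (rule pe_concat[OF ne])
    have s1: "sorted (map lam (path_edges ws))" using ws(2) by (intro sorted_const[of _ "lam {a,b}"]) auto
    have le: "x \<le> y" if "x \<in> set (map lam (path_edges ws))" "y \<in> set (map lam (path_edges W))" for x y
    proof -
      have "x = lam {a,b}" using that(1) ws(2) by auto
      moreover have "y \<in> lam ` set (path_edges xs)" using that(2) W(3) by auto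
      ultimately show ?thesis using lb by auto
    qed
    have "sorted (map lam (path_edges ws) @ map lam (path_edges W))"
      unfolding sorted_append using s1 W(2) le by blast
    then have s: "sorted (map lam (path_edges (ws @ tl W)))" using pc by simp
    have sub: "lam ` set (path_edges (ws @ tl W)) \<subseteq> lam ` set (path_edges (a # xs))"
      using pc pe ws(2) W(3) by auto
    have "length (ws @ tl W) - 1 \<le> t * (length (a # xs) - 1)"
    proof -
      have "length (ws @ tl W) - 1 = (length ws - 1) + (length W - 1)" using wa(2) ne by (cases ws; cases W) auto
      also have "\<dots> \<le> t + t * (length xs - 1)" using ws(3) W(4) by linarith
      also have "\<dots> = t * (length (a # xs) - 1)" using Cons by (simp add: algebra_simps)
      finally show ?thesis .
    qed
    then show ?thesis using wa(1) s sub la by (intro exI[of _ "ws @ tl W"]) auto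
  qed
qed

lemma log_arith:
  assumes "2 \<le> n" "16^r \<le> n"
  shows "2*r+1 \<le> nat \<lfloor>log 2 (real n)\<rfloor>"
proof -
  have "(2::nat)^(4*r) \<le> n" using assms(2) by (simp add: power_mult)
  then have "real (4*r) \<le> log 2 (real n)" using le_log2_of_power by blast
  then have a: "4*r \<le> nat \<lfloor>log 2 (real n)\<rfloor>" by (rule le_nat_floor)
  have "(2::nat)^1 \<le> n" using assms(1) by simp
  then have "real 1 \<le> log 2 (real n)" using le_log2_of_power by blast
  then have b: "1 \<le> nat \<lfloor>log 2 (real n)\<rfloor>" by (rule le_nat_floor)
  show ?thesis using a b by (cases "r = 0") auto
qed


theorem corollary23:
  shows "\<exists>C::real. \<forall>(V::nat set) E lam. temporal_graph V E lam \<longrightarrow>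
     (\<exists>H. temporal_spanner V E lam (nat \<lfloor>log 2 (real (card V))\<rfloor>) H \<and>
          real (card H) \<le> C * real (lifetime E lam) * real (card V))"
proof (intro exI[of _ 16] allI impI)
  fix V :: "nat set" and E lam
  assume tg: "temporal_graph V E lam"
  have fin: "finite V" and Esub: "E \<subseteq> {e. \<exists>a b. e = {a, b} \<and> a \<noteq> b \<and> a \<in> V \<and> b \<in> V}"
    using tg by (auto simp: temporal_graph_def)
  define t where "t = nat \<lfloor>log 2 (real (card V))\<rfloor>"
  have finE: "finite E"
  proof -
    have "E \<subseteq> Pow V" using Esub by auto
    then show ?thesis by (rule finite_subset) (simp add: fin)
  qed
  have "\<forall>l. \<exists>S. S \<subseteq> {e \<in> E. lam e = l} \<and> card S \<le> 16 * card V \<and>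
     (\<forall>a b. {a,b} \<in> {e \<in> E. lam e = l} \<longrightarrow> (\<exists>ws r. walk S ws a b \<and> length ws \<le> 2*r+2 \<and> 16^r \<le> card V))"
  proof
    fix l
    have "{e \<in> E. lam e = l} \<subseteq> {e. \<exists>a b. e = {a, b} \<and> a \<noteq> b \<and> a \<in> V \<and> b \<in> V}" using Esub by blast
    from static_spanner[OF fin this]
    show "\<exists>S. S \<subseteq> {e \<in> E. lam e = l} \<and> card S \<le> 16 * card V \<and>
     (\<forall>a b. {a,b} \<in> {e \<in> E. lam e = l} \<longrightarrow> (\<exists>ws r. walk S ws a b \<and> length ws \<le> 2*r+2 \<and> 16^r \<le> card V))"
      by blast
  qed
  from choice[OF this] obtain SS where SSall: "\<forall>l. SS l \<subseteq> {e \<in> E. lam e = l} \<and> card (SS l) \<le> 16 * card V \<and>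
     (\<forall>a b. {a,b} \<in> {e \<in> E. lam e = l} \<longrightarrow> (\<exists>ws r. walk (SS l) ws a b \<and> length ws \<le> 2*r+2 \<and> 16^r \<le> card V))"
    by blast
  have SS: "\<And>l. SS l \<subseteq> {e \<in> E. lam e = l}" "\<And>l. card (SS l) \<le> 16 * card V"
    "\<And>l a b. {a,b} \<in> {e \<in> E. lam e = l} \<Longrightarrow> (\<exists>ws r. walk (SS l) ws a b \<and> length ws \<le> 2*r+2 \<and> 16^r \<le> card V)"
    using SSall by blast+
  define H where "H = (\<Union>l \<in> lam ` E. SS l)"
  have HE: "H \<subseteq> E" using SS(1) H_def by blast
  have "card H \<le> (\<Sum>l \<in> lam ` E. card (SS l))" unfolding H_def using finE by (intro card_UN_le) auto
  also have "\<dots> \<le> (\<Sum>l \<in> lam ` E. 16 * card V)" using SS(2) by (intro sum_mono) auto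
  also have "\<dots> = 16 * lifetime E lam * card V" by (simp add: lifetime_def)
  finally have cardH: "real (card H) \<le> 16 * real (lifetime E lam) * real (card V)"
    by (metis of_nat_le_iff of_nat_mult of_nat_numeral)
  have edge: "\<exists>ws. walk H ws a b \<and> (\<forall>f\<in>set (path_edges ws). lam f = lam {a,b}) \<and> length ws \<le> t + 1"
    if ab: "{a,b} \<in> E" for a b
  proof -
    obtain ws r where w: "walk (SS (lam {a,b})) ws a b" "length ws \<le> 2*r+2" "16^r \<le> card V"
      using SS(3)[of a b "lam {a,b}"] ab by auto
    obtain a' b' where ab': "{a,b} = {a',b'}" "a' \<noteq> b'" "a' \<in> V" "b' \<in> V" using ab Esub by blast
    then have "card {a',b'} \<le> card V" using fin by (intro card_mono) auto
    moreover have "card {a',b'} = 2" using ab'(2) by simp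
    ultimately have "2 \<le> card V" by simp
    then have "2*r+1 \<le> t" unfolding t_def using log_arith w(3) by blast
    moreover have "SS (lam {a,b}) \<subseteq> H" using ab H_def by blast
    moreover have "\<forall>f\<in>set (path_edges ws). lam f = lam {a,b}" using w(1) SS(1)[of "lam {a,b}"] by (auto simp: walk_def)
    ultimately show ?thesis using w(1,2) walk_mono by (intro exI[of _ ws]) auto
  qed
  have "temporal_spanner V E lam t H"
    unfolding temporal_spanner_def
  proof (intro conjI HE ballI impI)
    fix u v assume "u \<in> V" "v \<in> V" and fin_d: "temporal_dist E lam u v \<noteq> \<infinity>"
    define P where "P = {xs. temporal_path E lam xs \<and> hd xs = u \<and> last xs = v}"
    have dG: "temporal_dist E lam u v = Inf ((\<lambda>xs. enat (length xs - 1)) ` P)"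
      unfolding temporal_dist_def P_def by simp
    have "(\<lambda>xs. enat (length xs - 1)) ` P \<noteq> {}" using fin_d dG by (auto simp: top_enat_def)
    then have "temporal_dist E lam u v \<in> (\<lambda>xs. enat (length xs - 1)) ` P"
      unfolding dG Inf_enat_def by (auto intro: LeastI)
    then obtain xs where xs: "xs \<in> P" "temporal_dist E lam u v = enat (length xs - 1)" by auto
    then have xs': "xs \<noteq> []" "set (path_edges xs) \<subseteq> E" "sorted (map lam (path_edges xs))" "hd xs = u" "last xs = v"
      unfolding P_def temporal_path_def by auto
    obtain W where W: "walk H W u v" "sorted (map lam (path_edges W))" "length W - 1 \<le> t * (length xs - 1)"
      using temporal_walk[of E H lam t, OF edge xs'(1-3)] xs' by auto
    obtain ys where ys: "temporal_path H lam ys" "hd ys = u" "last ys = v" "length ys \<le> length W"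
      using shortcut[of W H lam] W unfolding walk_def by auto
    have "temporal_dist H lam u v \<le> enat (length ys - 1)"
      unfolding temporal_dist_def using ys by (intro INF_lower) auto
    also have "\<dots> \<le> enat (t * (length xs - 1))" using ys(4) W(3) by simp
    also have "\<dots> = enat t * temporal_dist E lam u v" using xs(2) by simp
    finally show "temporal_dist H lam u v \<le> enat t * temporal_dist E lam u v" .
  qed
  then show "\<exists>H. temporal_spanner V E lam (nat \<lfloor>log 2 (real (card V))\<rfloor>) H \<and>
          real (card H) \<le> 16 * real (lifetime E lam) * real (card V)"
    using cardH unfolding t_def by blast
qed

end
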